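(* Let $B(X)\in\mathbb Z[X]$ be monic and irreducible, and suppose $B$ has a non-real root $\beta$ such that every root of $B$ other than $\beta$ and $\overline\beta$ has absolute value strictly less than $|\beta|$. Let $\alpha\in\mathbb Z$ with $|\alpha|>1$, and suppose there are coprime positive integers $p,q$ with $\alpha^{2p}=(\beta\overline\beta)^q$. Then $B(X)=X^2+aX+N$ for some $a\in\mathbb Z$ and positive integer $N$ with $a^2-4N<0$, and there is an integer $b>1$ with $N=b^p$ and $|\alpha|=b^{q/2}$; in particular, if $b$ is not a perfect square then $q$ is even. *)

theory Defs
  imports Complex_Main "HOL-Computational_Algebra.Computational_Algebra"
begin

end

theory Submission imports Defs "Subresultants.Subresultant_Gcd" "HOL-Computational_Algebra.Field_as_Ring" begin

lemma res_zero_common: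
  fixes f g :: "complex poly"
  assumes "f \<noteq> 0" "poly f z = 0" "poly g z = 0"
  shows "resultant f g = 0"
proof -
  have "[:-z,1:] dvd f" "[:-z,1:] dvd g" using assms by (simp_all add: poly_eq_0_iff_dvd)
  hence d: "[:-z,1:] dvd gcd f g" by simp
  have "gcd f g \<noteq> 0" using assms(1) by simp
  from dvd_imp_degree_le[OF d this] have "degree (gcd f g) \<noteq> 0" by simp
  thus ?thesis by (simp add: resultant_0_gcd)
qed

lemma res_zero_root:
  fixes f g :: "complex poly"
  assumes "resultant f g = 0"
  obtains z where "poly f z = 0" "poly g z = 0"
proof -
  from assms have "degree (gcd f g) \<noteq> 0" by (simp add: resultant_0_gcd)
  then obtain z where "poly (gcd f g) z = 0"
    by (metis fundamental_theorem_of_algebra constant_degree)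
  hence "poly f z = 0" "poly g z = 0"
    by (meson dvd_trans gcd_dvd1 gcd_dvd2 poly_eq_0_iff_dvd)+
  thus ?thesis using that by blast
qed

lemma root_dvd:
  fixes B R :: "int poly"
  assumes irr: "irreducible B"
    and r1: "poly (map_poly (of_int::int\<Rightarrow>complex) B) z = 0"
    and r2: "poly (map_poly (of_int::int\<Rightarrow>complex) R) z = 0"
  shows "B dvd R"
proof -
  have B0: "B \<noteq> 0" using irr by auto
  hence "map_poly (of_int::int\<Rightarrow>complex) B \<noteq> 0" by simp
  from res_zero_common[OF this r1 r2]
  have "resultant (map_poly (of_int::int\<Rightarrow>complex) B) (map_poly of_int R) = 0" .
  hence "(of_int (resultant B R) :: complex) = 0" by (simp add: of_int_hom.resultant_hom)
  hence "resultant B R = 0" by simp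
  hence deg: "degree (gcd B R) \<noteq> 0" by (simp add: resultant_0_gcd)
  obtain h where Bh: "B = gcd B R * h" by (meson gcd_dvd1 dvdE)
  from irreducibleD[OF irr Bh] have "is_unit (gcd B R) \<or> is_unit h" .
  moreover have "\<not> is_unit (gcd B R)" using deg by (auto simp: is_unit_poly_iff)
  ultimately have "is_unit h" by blast
  hence "B dvd gcd B R" using Bh by (metis mult_unit_dvd_iff dvd_refl)
  thus ?thesis using gcd_dvd2 dvd_trans by blast
qed

lemma dvd_root:
  fixes B R :: "int poly"
  assumes "B dvd R" "poly (map_poly (of_int::int\<Rightarrow>complex) B) z = 0"
  shows "poly (map_poly (of_int::int\<Rightarrow>complex) R) z = 0"
proof -
  from assms obtain K where "R = B * K" by blast
  thus ?thesis using assms(2) by (simp add: of_int_poly_hom.hom_mult)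
qed

lemma poly_cnj_int:
  "poly (map_poly (of_int::int\<Rightarrow>complex) B) (cnj z) = cnj (poly (map_poly of_int B) z)"
  by (simp add: poly_altdef)

lemma eval_hom: "comm_ring_hom (\<lambda>f::int poly. poly (map_poly (of_int::int\<Rightarrow>complex) f) x)"
  by unfold_locales (simp_all add: of_int_poly_hom.hom_mult of_int_poly_hom.hom_add)

lemma poly_map_const[simp]: "poly (map_poly (of_int::int\<Rightarrow>complex) [:c:]) x = of_int c"
  by (cases "c = 0") (simp_all add: map_poly_pCons)

lemma eval_res:
  fixes B :: "int poly" and c :: int and x :: complex
  assumes x: "x \<noteq> 0" and q: "q > 0" and B: "lead_coeff B = 1"
  shows "poly (map_poly of_int (resultant (map_poly (\<lambda>c. [:c:]) B) (monom (monom 1 q) q - [:[:c:]:]))) x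
      = resultant (map_poly of_int B) (monom (x^q) q - [:of_int c:])"
proof -
  interpret e: comm_ring_hom "\<lambda>f::int poly. poly (map_poly (of_int::int\<Rightarrow>complex) f) x"
    by (rule eval_hom)
  let ?e = "\<lambda>f::int poly. poly (map_poly (of_int::int\<Rightarrow>complex) f) x"
  have m1: "map_poly ?e (map_poly (\<lambda>c. [:c:]) B) = map_poly of_int B"
    by (rule poly_eqI) (simp add: coeff_map_poly)
  have m2: "map_poly ?e (monom (monom 1 q) q - [:[:c:]:]) = monom (x^q) q - [:of_int c:]"
    by (rule poly_eqI) (use q in \<open>simp add: coeff_map_poly coeff_monom poly_monom coeff_pCons split: nat.splits\<close>)
  have d1: "degree (map_poly ?e (map_poly (\<lambda>c. [:c:]) B)) = degree (map_poly (\<lambda>c. [:c:]) B)"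
    unfolding m1 by (simp add: degree_map_poly B)
  have dg: "degree (monom a q - [:b:]) = q" if "a \<noteq> 0" for a b :: "'a :: comm_ring_1"
  proof -
    have "monom a q - [:b:] = monom a q + [:-b:]" by simp
    also have "degree \<dots> = degree (monom a q)"
      by (rule degree_add_eq_left) (use q that in \<open>simp add: degree_monom_eq\<close>)
    finally show ?thesis using that by (simp add: degree_monom_eq)
  qed
  have d2: "degree (map_poly ?e (monom (monom 1 q) q - [:[:c:]:])) = degree (monom (monom 1 q) q - [:[:c:]:])"
    unfolding m2 using x by (simp add: dg)
  show ?thesis
    using e.resultant_map_poly[OF d1 d2] unfolding m1 m2 by simp
qed

lemma coprime_power_root:
  fixes n m :: nat
  assumes p: "p > 0" and q: "q > 0" and cop: "coprime p q" and eq: "n ^ q = m ^ p" and n: "n > 0"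
  shows "\<exists>b. n = b ^ p \<and> m = b ^ q"
proof -
  have m: "m \<noteq> 0" using eq n p q by (metis gr_implies_not0 power_not_zero zero_power)
  have "is_nth_power p n"
  proof (subst is_nth_power_conv_multiplicity_nat[OF p], intro allI impI)
    fix r :: nat assume r: "prime r"
    have "q * multiplicity r n = multiplicity r (n ^ q)"
      using r n by (simp add: prime_elem_multiplicity_power_distrib)
    also have "\<dots> = p * multiplicity r m"
      unfolding eq using r m by (simp add: prime_elem_multiplicity_power_distrib)
    finally have "p dvd q * multiplicity r n" by (metis dvd_triv_left)
    thus "p dvd multiplicity r n" using cop by (simp add: coprime_dvd_mult_right_iff)
  qed
  then obtain b where b: "n = b ^ p" by (auto elim: is_nth_powerE)
  have "(b ^ q) ^ p = m ^ p" using eq b by (simp add: power_mult[symmetric] mult.commute)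
  hence "b ^ q = m" using p power_eq_imp_eq_base[of "b ^ q" p m] by simp
  thus ?thesis using b by blast
qed

theorem mainTheorem6:
  fixes B :: "int poly" and \<beta> :: complex and \<alpha> :: int and p q :: nat
  assumes monic: "lead_coeff B = 1"
    and irred: "irreducible B"
    and root: "poly (map_poly of_int B) \<beta> = 0"
    and nonreal: "Im \<beta> \<noteq> 0"
    and dom: "\<And>z. poly (map_poly of_int B) z = 0 \<Longrightarrow> z \<noteq> \<beta> \<Longrightarrow> z \<noteq> cnj \<beta> \<Longrightarrow> cmod z < cmod \<beta>"
    and alpha: "\<bar>\<alpha>\<bar> > 1"
    and pq: "p > 0" "q > 0" "coprime p q"
    and eq: "(of_int \<alpha> :: complex) ^ (2 * p) = (\<beta> * cnj \<beta>) ^ q"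
  shows "\<exists>a N :: int. N > 0 \<and> B = [:N, a, 1:] \<and> a\<^sup>2 - 4 * N < 0 \<and>
           (\<exists>b :: int. b > 1 \<and> N = b ^ p \<and> real_of_int \<bar>\<alpha>\<bar> = real_of_int b powr (real q / 2) \<and>
              ((\<nexists>c :: int. b = c\<^sup>2) \<longrightarrow> even q))"
proof -
  define Bc where "Bc = map_poly (of_int::int\<Rightarrow>complex) B"
  have B0: "B \<noteq> 0" using monic by auto
  have Bc0: "Bc \<noteq> 0" using B0 by (simp add: Bc_def)
  have rootb: "poly Bc \<beta> = 0" using root by (simp add: Bc_def)
  have rootc: "poly Bc (cnj \<beta>) = 0" using root by (simp add: Bc_def poly_cnj_int)
  have beta0: "\<beta> \<noteq> 0" using nonreal by auto
  have bpos: "cmod \<beta> > 0" using beta0 by simp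
  have le: "cmod z \<le> cmod \<beta>" if "poly Bc z = 0" for z
    using dom[of z] that unfolding Bc_def by (cases "z = \<beta> \<or> z = cnj \<beta>") auto
  have nz: "poly Bc 0 \<noteq> 0"
  proof
    assume h: "poly Bc 0 = 0"
    have X: "map_poly (of_int::int\<Rightarrow>complex) [:0,1:] = [:0,1:]" by (simp add: map_poly_pCons)
    have "B dvd [:0,1:]" by (rule root_dvd[OF irred, of 0]) (use h in \<open>simp_all add: Bc_def X\<close>)
    from dvd_root[OF this root] have "\<beta> = 0" by (simp add: X)
    with beta0 show False by simp
  qed
  define M where "M = \<alpha> ^ (2 * p)"
  define R where "R = resultant (map_poly (\<lambda>c. [:c:]) B) (monom (monom 1 q) q - [:[:M:]:])"
  have Rx: "poly (map_poly of_int R) x = resultant Bc (monom (x^q) q - [:of_int M:])" if "x \<noteq> 0" for x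
    unfolding R_def Bc_def by (rule eval_res[OF that pq(2) monic])
  have Meq: "(of_int M :: complex) = (\<beta> * cnj \<beta>) ^ q" using eq by (simp add: M_def)
  have "poly (map_poly of_int R) \<beta> = 0"
    unfolding Rx[OF beta0]
    by (rule res_zero_common[OF Bc0 rootc]) (simp add: poly_monom Meq power_mult_distrib)
  hence BR: "B dvd R" by (rule root_dvd[OF irred root])
  have allroots: "\<gamma> = \<beta> \<or> \<gamma> = cnj \<beta>" if g: "poly Bc \<gamma> = 0" for \<gamma>
  proof (rule ccontr)
    assume ne: "\<not> (\<gamma> = \<beta> \<or> \<gamma> = cnj \<beta>)"
    have g0: "\<gamma> \<noteq> 0" using g nz by auto
    have "poly (map_poly of_int R) \<gamma> = 0" by (rule dvd_root[OF BR]) (use g in \<open>simp add: Bc_def\<close>)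
    hence "resultant Bc (monom (\<gamma>^q) q - [:of_int M:]) = 0" using Rx[OF g0] by simp
    then obtain \<delta> where d1: "poly Bc \<delta> = 0" and d2: "poly (monom (\<gamma>^q) q - [:of_int M:]) \<delta> = 0"
      by (rule res_zero_root)
    from d2 have "(\<gamma> * \<delta>) ^ q = (\<beta> * cnj \<beta>) ^ q" by (simp add: poly_monom Meq power_mult_distrib)
    hence "cmod (\<gamma> * \<delta>) = cmod (\<beta> * cnj \<beta>)" using pq(2) by (rule power_eq_imp_eq_norm)
    hence e: "cmod \<gamma> * cmod \<delta> = cmod \<beta> * cmod \<beta>" by (simp add: norm_mult)
    have "cmod \<beta> * cmod \<beta> \<le> cmod \<gamma> * cmod \<beta>"
      unfolding e[symmetric] by (rule mult_left_mono[OF le[OF d1]]) simp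
    hence "cmod \<beta> \<le> cmod \<gamma>" using bpos by simp
    moreover have "cmod \<gamma> < cmod \<beta>" using dom[of \<gamma>] g ne by (simp add: Bc_def)
    ultimately show False by simp
  qed
  have sqf: "rsquarefree Bc"
  proof (unfold rsquarefree_roots, intro allI notI)
    fix z assume h: "poly Bc z = 0 \<and> poly (pderiv Bc) z = 0"
    have pd: "pderiv Bc = map_poly of_int (pderiv B)" by (simp add: Bc_def of_int_hom.map_poly_pderiv)
    have "B dvd pderiv B" by (rule root_dvd[OF irred, of z]) (use h pd in \<open>simp_all add: Bc_def\<close>)
    moreover have dB: "degree B \<noteq> 0"
    proof
      assume "degree B = 0"
      hence "B = 1" using monic by (metis lead_coeff_1 monom_eq_1 degree_0_id monom_0)
      thus False using root by simp
    qed
    hence "pderiv B \<noteq> 0" by (simp add: pderiv_eq_0_iff)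
    ultimately have "degree B \<le> degree (pderiv B)" by (simp add: dvd_imp_degree_le)
    thus False using dB by (simp add: degree_pderiv)
  qed
  have bnc: "\<beta> \<noteq> cnj \<beta>" using nonreal by (metis cnj.simps(2) neg_equal_zero)
  have roots: "{z. poly Bc z = 0} = {\<beta>, cnj \<beta>}" using allroots rootb rootc by auto
  have lc: "lead_coeff Bc = 1" using monic by (simp add: Bc_def degree_map_poly)
  have "Bc = Polynomial.smult (lead_coeff Bc) (\<Prod>z|poly Bc z = 0. [:-z, 1:])"
    using complex_poly_decompose_rsquarefree[OF sqf] by simp
  also have "\<dots> = [:-\<beta>,1:] * [:-cnj \<beta>,1:]" unfolding roots lc using bnc by simp
  also have "\<dots> = [:\<beta> * cnj \<beta>, -(\<beta> + cnj \<beta>), 1:]" by (simp add: algebra_simps)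
  finally have Bceq: "Bc = [:\<beta> * cnj \<beta>, -(\<beta> + cnj \<beta>), 1:]" .
  define N where "N = coeff B 0"
  define a where "a = coeff B 1"
  have cB: "coeff Bc n = of_int (coeff B n)" for n by (simp add: Bc_def coeff_map_poly)
  have cN: "(of_int N :: complex) = \<beta> * cnj \<beta>" using cB[of 0] by (simp add: Bceq N_def)
  have ca: "(of_int a :: complex) = -(\<beta> + cnj \<beta>)" using cB[of 1] by (simp add: Bceq a_def)
  have Beq: "B = [:N, a, 1:]"
  proof (rule poly_eqI)
    fix n
    have "(of_int (coeff B n) :: complex) = of_int (coeff [:N, a, 1:] n)"
      unfolding cB[symmetric] Bceq cN[symmetric] ca[symmetric]
      by (cases n; cases "n - 1"; cases "n - 2") (auto simp: coeff_pCons split: nat.splits)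
    thus "coeff B n = coeff [:N, a, 1:] n" by (simp only: of_int_eq_iff)
  qed
  have Nr: "real_of_int N = cmod \<beta> ^ 2"
  proof -
    have "complex_of_real (real_of_int N) = complex_of_real (cmod \<beta> ^ 2)"
      using cN complex_norm_square[of \<beta>] by simp
    thus ?thesis by (simp only: of_real_eq_iff)
  qed
  have Npos: "N > 0" using Nr bpos by (metis of_int_0_less_iff zero_less_power)
  have "(of_int (a^2 - 4 * N) :: complex) = (\<beta> - cnj \<beta>)^2"
    by (simp only: of_int_diff of_int_mult of_int_power of_int_numeral cN ca) (simp add: power2_eq_square algebra_simps)
  also have "\<dots> = complex_of_real (- 4 * Im \<beta> ^ 2)"
    by (simp add: complex_eq_iff power2_eq_square)
  finally have "real_of_int (a^2 - 4 * N) = - 4 * Im \<beta> ^ 2"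
    by (metis of_real_eq_iff of_real_of_int_eq)
  moreover have "Im \<beta> ^ 2 > 0" using nonreal by simp
  ultimately have "real_of_int (a^2 - 4 * N) < 0" by simp
  hence disc: "a^2 - 4 * N < 0" by (simp only: of_int_less_0_iff)
  have "(of_int (N ^ q) :: complex) = of_int ((\<alpha>^2) ^ p)" using cN eq by (simp add: power_mult)
  hence Nq: "N ^ q = (\<alpha>^2) ^ p" by (simp only: of_int_eq_iff)
  have "nat N ^ q = nat (\<alpha>^2) ^ p" using Nq Npos by (metis nat_power_eq zero_le_power2 less_imp_le)
  then obtain b0 where b0: "nat N = b0 ^ p" "nat (\<alpha>^2) = b0 ^ q"
    using coprime_power_root[OF pq(1) pq(2) pq(3)] Npos by force
  define b where "b = int b0"
  have bN: "N = b ^ p" using b0(1) Npos unfolding b_def by (metis int_nat_eq of_nat_power less_imp_le)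
  have ba: "\<alpha>^2 = b ^ q" using b0(2) unfolding b_def by (metis int_nat_eq of_nat_power zero_le_power2)
  have b1: "b > 1"
  proof (rule ccontr)
    assume "\<not> b > 1"
    hence "b ^ q \<le> 1" using b_def by (simp add: power_le_one)
    moreover have "\<alpha>^2 > 1" using alpha by (metis abs_ge_zero abs_power2 less_1_mult power2_eq_square abs_mult_self_eq)
    ultimately show False using ba by simp
  qed
  have absa: "real_of_int \<bar>\<alpha>\<bar> = real_of_int b powr (real q / 2)"
  proof -
    define X where "X = real_of_int b"
    have bp: "X > 0" using b1 by (simp add: X_def)
    have "(X powr (real q / 2))^2 = (X powr (real q / 2)) powr (real 2)"
      by (subst powr_realpow) (use bp in auto)
    also have "\<dots> = X powr (real q)" by (simp add: powr_powr)
    also have "\<dots> = X ^ q" using bp by (simp add: powr_realpow)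
    also have "\<dots> = real_of_int \<bar>\<alpha>\<bar> ^ 2" unfolding X_def of_int_power[symmetric] ba[symmetric] by simp
    finally have h: "real_of_int \<bar>\<alpha>\<bar> ^ 2 = (X powr (real q / 2))^2" by simp
    show ?thesis unfolding X_def[symmetric]
      by (rule power2_eq_imp_eq[OF h]) auto
  qed
  have sq: "even q" if ns: "\<nexists>c :: int. b = c\<^sup>2"
  proof (rule ccontr)
    assume "odd q"
    then obtain k where k: "q = 2 * k + 1" using oddE by blast
    have ab: "\<alpha>^2 = b * (b^k)^2" using ba k by (simp add: power_add power_mult mult.commute)
    have "(b^k)^2 dvd \<alpha>^2" unfolding ab by simp
    hence "b^k dvd \<alpha>" by (simp add: pow_divides_pow_iff)
    then obtain e where e: "\<alpha> = b^k * e" by blast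
    have "(b^k)^2 * e^2 = (b^k)^2 * b" using ab e by (simp add: power_mult_distrib mult.commute)
    hence "b = e^2" using b1 by simp
    with ns show False by blast
  qed
  show ?thesis using Npos Beq disc b1 bN absa sq by blast
qed

end
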